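(* There is an absolute constant $C$ such that the following holds. Let $e_1,\dots,e_k\in\mathbb{C}^{n\times n}$ be an anticommuting family with $e_1^2,\dots,e_k^2\neq 0$. Then $k\le Cn$.
   Context: A family $e_1,\dots,e_k$ of complex $n\times n$ matrices is called anticommuting if $e_ie_j=-e_je_i$ for all distinct $i,j\in\{1,\dots,k\}$. *)

theory Defs
  imports "Jordan_Normal_Form.Matrix"
begin

definition anticommuting :: "nat \<Rightarrow> nat \<Rightarrow> (nat \<Rightarrow> complex mat) \<Rightarrow> bool" where
  "anticommuting n k e \<longleftrightarrow>
     (\<forall>i<k. e i \<in> carrier_mat n n) \<and>
     (\<forall>i<k. \<forall>j<k. i \<noteq> j \<longrightarrow> e i * e j = - (e j * e i))"

end

theory Submission imports Defs "HOL-Computational_Algebra.Polynomial" begin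

lemma homog_nonzero:
  fixes L :: "nat \<Rightarrow> nat \<Rightarrow> complex"
  assumes "finite J" "m < card J"
  shows "\<exists>z. (\<exists>j\<in>J. z j \<noteq> 0) \<and> (\<forall>r<m. (\<Sum>j\<in>J. L r j * z j) = 0)"
  using assms
proof (induction m arbitrary: J L)
  case 0
  then obtain j0 where "j0 \<in> J" by (metis card.empty card_ge_0_finite equals0I less_irrefl)
  then show ?case by (rule_tac x="\<lambda>_. 1" in exI) auto
next
  case (Suc m)
  show ?case
  proof (cases "\<exists>p\<in>J. L m p \<noteq> 0")
    case False
    from Suc.IH[of J L] Suc.prems obtain z where z: "\<exists>j\<in>J. z j \<noteq> 0" "\<forall>r<m. (\<Sum>j\<in>J. L r j * z j) = 0" by auto
    have "\<forall>r<Suc m. (\<Sum>j\<in>J. L r j * z j) = 0"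
    proof (intro allI impI)
      fix r assume "r < Suc m"
      then consider "r < m" | "r = m" by linarith
      then show "(\<Sum>j\<in>J. L r j * z j) = 0"
        by cases (use z False in auto)
    qed
    with z show ?thesis by blast
  next
    case True
    then obtain p where p: "p \<in> J" "L m p \<noteq> 0" by blast
    define J' where "J' = J - {p}"
    have fJ': "finite J'" using Suc.prems J'_def by auto
    have cJ': "m < card J'" using Suc.prems p J'_def by auto
    define L' where "L' = (\<lambda>r j. L r j - L r p / L m p * L m j)"
    from Suc.IH[OF fJ' cJ', of L'] obtain z' where
      z': "\<exists>j\<in>J'. z' j \<noteq> 0" "\<forall>r<m. (\<Sum>j\<in>J'. L' r j * z' j) = 0" by blast
    define S where "S = (\<Sum>j\<in>J'. L m j * z' j)"
    define z where "z = (\<lambda>j. if j = p then - S / L m p else z' j)"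
    have nz: "\<exists>j\<in>J. z j \<noteq> 0" using z' unfolding z_def J'_def by auto
    have split: "(\<Sum>j\<in>J. L r j * z j) = L r p * z p + (\<Sum>j\<in>J'. L r j * z' j)" for r
    proof -
      have "(\<Sum>j\<in>J. L r j * z j) = L r p * z p + (\<Sum>j\<in>J'. L r j * z j)"
        unfolding J'_def using Suc.prems(1) p(1) by (simp add: sum.remove)
      also have "(\<Sum>j\<in>J'. L r j * z j) = (\<Sum>j\<in>J'. L r j * z' j)"
        by (rule sum.cong) (auto simp: z_def J'_def)
      finally show ?thesis .
    qed
    have "\<forall>r<Suc m. (\<Sum>j\<in>J. L r j * z j) = 0"
    proof (intro allI impI)
      fix r assume "r < Suc m"
      then consider "r < m" | "r = m" by linarith
      then show "(\<Sum>j\<in>J. L r j * z j) = 0"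
      proof cases
        case 1
        have "0 = (\<Sum>j\<in>J'. L' r j * z' j)" using z' 1 by auto
        also have "\<dots> = (\<Sum>j\<in>J'. L r j * z' j) - L r p / L m p * S"
          unfolding L'_def S_def by (simp add: algebra_simps sum_subtractf sum_distrib_left)
        finally have "(\<Sum>j\<in>J'. L r j * z' j) = L r p / L m p * S" by simp
        then show ?thesis using split[of r] p(2) by (simp add: z_def field_simps)
      next
        case 2
        then show ?thesis using split[of r] p(2) by (simp add: z_def S_def)
      qed
    qed
    with nz show ?thesis by blast
  qed
qed

definition bil :: "nat \<Rightarrow> (nat \<Rightarrow> nat \<Rightarrow> complex) \<Rightarrow> (nat \<Rightarrow> complex) \<Rightarrow> (nat \<Rightarrow> complex) \<Rightarrow> complex" where
  "bil n M x y = (\<Sum>a<n. \<Sum>b<n. x a * M a b * y b)"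

lemma bil_expand:
  "bil n M (\<lambda>a. x a + t * x' a) (\<lambda>b. y b + t * y' b) =
   bil n M x y + t * ((bil n M x y' + bil n M x' y) + t * bil n M x' y')"
  unfolding bil_def by (simp add: algebra_simps sum.distrib sum_distrib_left)

lemma common_xy:
  "(\<forall>i<(m::nat). \<exists>x y. bil n (M i) x y \<noteq> 0) \<Longrightarrow> \<exists>x y. \<forall>i<m. bil n (M i) x y \<noteq> 0"
proof (induction m)
  case 0
  then show ?case by auto
next
  case (Suc m)
  then obtain x y where xy: "\<forall>i<m. bil n (M i) x y \<noteq> 0" by auto
  from Suc.prems obtain x' y' where xy': "bil n (M m) x' y' \<noteq> 0" by auto
  define P where "P = (\<lambda>i. [:bil n (M i) x y, bil n (M i) x y' + bil n (M i) x' y, bil n (M i) x' y':])"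
  have Pnz: "P i \<noteq> 0" if "i < Suc m" for i
  proof (cases "i < m")
    case True then show ?thesis using xy by (simp add: P_def)
  next
    case False then have "i = m" using that by simp
    then show ?thesis using xy' by (simp add: P_def)
  qed
  have fin: "finite (\<Union>i<Suc m. {t. poly (P i) t = 0})"
    using Pnz poly_roots_finite by auto
  obtain t where t: "t \<notin> (\<Union>i<Suc m. {t. poly (P i) t = 0})"
    using ex_new_if_finite[OF infinite_UNIV_char_0 fin] by blast
  have "\<forall>i<Suc m. bil n (M i) (\<lambda>a. x a + t * x' a) (\<lambda>b. y b + t * y' b) \<noteq> 0"
    using t by (auto simp: bil_expand P_def)
  then show ?case by blast
qed

lemma swap4a: "(\<Sum>j\<in>A. \<Sum>a\<in>B. \<Sum>b\<in>C. \<Sum>c\<in>D. f j a b c) = (\<Sum>a\<in>B. \<Sum>c\<in>D. \<Sum>j\<in>A. \<Sum>b\<in>C. f j a b c)"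
proof -
  have "(\<Sum>j\<in>A. \<Sum>a\<in>B. \<Sum>b\<in>C. \<Sum>c\<in>D. f j a b c) = (\<Sum>a\<in>B. \<Sum>j\<in>A. \<Sum>b\<in>C. \<Sum>c\<in>D. f j a b c)"
    by (rule sum.swap)
  also have "\<dots> = (\<Sum>a\<in>B. \<Sum>j\<in>A. \<Sum>c\<in>D. \<Sum>b\<in>C. f j a b c)"
    by (intro sum.cong refl) (rule sum.swap)
  also have "\<dots> = (\<Sum>a\<in>B. \<Sum>c\<in>D. \<Sum>j\<in>A. \<Sum>b\<in>C. f j a b c)"
    by (intro sum.cong refl) (rule sum.swap)
  finally show ?thesis .
qed

lemma swap4b: "(\<Sum>j\<in>A. \<Sum>a\<in>B. \<Sum>b\<in>C. \<Sum>c\<in>D. f j a b c) = (\<Sum>c\<in>D. \<Sum>b\<in>C. \<Sum>j\<in>A. \<Sum>a\<in>B. f j a b c)"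
proof -
  have "(\<Sum>j\<in>A. \<Sum>a\<in>B. \<Sum>b\<in>C. \<Sum>c\<in>D. f j a b c) = (\<Sum>j\<in>A. \<Sum>a\<in>B. \<Sum>c\<in>D. \<Sum>b\<in>C. f j a b c)"
    by (intro sum.cong refl) (rule sum.swap)
  also have "\<dots> = (\<Sum>j\<in>A. \<Sum>c\<in>D. \<Sum>a\<in>B. \<Sum>b\<in>C. f j a b c)"
    by (intro sum.cong refl) (rule sum.swap)
  also have "\<dots> = (\<Sum>c\<in>D. \<Sum>j\<in>A. \<Sum>a\<in>B. \<Sum>b\<in>C. f j a b c)"
    by (rule sum.swap)
  also have "\<dots> = (\<Sum>c\<in>D. \<Sum>j\<in>A. \<Sum>b\<in>C. \<Sum>a\<in>B. f j a b c)"
    by (intro sum.cong refl) (rule sum.swap)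
  also have "\<dots> = (\<Sum>c\<in>D. \<Sum>b\<in>C. \<Sum>j\<in>A. \<Sum>a\<in>B. f j a b c)"
    by (intro sum.cong refl) (rule sum.swap)
  finally show ?thesis .
qed

lemma key:
  fixes E :: "nat \<Rightarrow> nat \<Rightarrow> nat \<Rightarrow> complex"
  assumes AC: "\<And>i j a b. i<k \<Longrightarrow> j<k \<Longrightarrow> i\<noteq>j \<Longrightarrow> a<n \<Longrightarrow> b<n \<Longrightarrow>
      (\<Sum>c<n. E i a c * E j c b) = - (\<Sum>c<n. E j a c * E i c b)"
  and SQ: "\<And>i. i<k \<Longrightarrow> \<exists>a<n. \<exists>b<n. (\<Sum>c<n. E i a c * E i c b) \<noteq> 0"
  shows "k \<le> 2*n"
proof (rule ccontr)
  assume "\<not> k \<le> 2*n"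
  hence kn: "2*n < k" by simp
  define M where "M = (\<lambda>i a b. \<Sum>c<n. E i a c * E i c b)"
  have "\<forall>i<k. \<exists>x y. bil n (M i) x y \<noteq> 0"
  proof (intro allI impI)
    fix i assume "i < k"
    from SQ[OF this] obtain a b where ab: "a<n" "b<n" "M i a b \<noteq> 0" unfolding M_def by blast
    have "bil n (M i) (\<lambda>a'. if a' = a then 1 else 0) (\<lambda>b'. if b' = b then 1 else 0) = M i a b"
    proof -
      have "(\<Sum>b'<n. (if a' = a then 1 else 0) * M i a' b' * (if b' = b then 1 else 0))
          = (if a' = a then M i a' b else 0)" for a'
        by (subst sum.cong[OF refl, of _ _ "\<lambda>b'. if b' = b then (if a' = a then M i a' b else 0) else 0"])
           (use ab in auto)
      then show ?thesis unfolding bil_def using ab by simp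
    qed
    with ab show "\<exists>x y. bil n (M i) x y \<noteq> 0" by metis
  qed
  from common_xy[OF this] obtain x y where xy: "\<forall>i<k. bil n (M i) x y \<noteq> 0" by blast
  define L where "L = (\<lambda>r j. if r < n then (\<Sum>b<n. E j r b * y b) else (\<Sum>a<n. x a * E j a (r-n)))"
  from homog_nonzero[of "{..<k}" "2*n" L] kn obtain z where
    z: "\<exists>j\<in>{..<k}. z j \<noteq> 0" "\<forall>r<2*n. (\<Sum>j\<in>{..<k}. L r j * z j) = 0" by auto
  have eq1: "(\<Sum>j<k. (\<Sum>b<n. E j c b * y b) * z j) = 0" if "c < n" for c
    using z(2)[rule_format, of c] that by (simp add: L_def)
  have eq2: "(\<Sum>j<k. (\<Sum>a<n. x a * E j a c) * z j) = 0" if "c < n" for c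
    using z(2)[rule_format, of "n+c"] that by (simp add: L_def)
  have zero: "z i = 0" if ik: "i < k" for i
  proof -
    define T where "T = (\<lambda>i j a b. \<Sum>c<n. E i a c * E j c b)"
    define S where "S = (\<Sum>j<k. z j * (\<Sum>a<n. \<Sum>b<n. x a * (T i j a b + T j i a b) * y b))"
    have inner0: "(\<Sum>a<n. \<Sum>b<n. x a * (T i j a b + T j i a b) * y b) = 0" if "j<k" "j \<noteq> i" for j
      by (intro sum.neutral ballI) (use AC[of i j] ik that in \<open>simp add: T_def\<close>)
    have "S = z i * (\<Sum>a<n. \<Sum>b<n. x a * (T i i a b + T i i a b) * y b)"
      unfolding S_def using ik inner0
      by (simp add: sum.remove[of "{..<k}" i])
    also have "\<dots> = z i * (2 * bil n (M i) x y)"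
      unfolding bil_def T_def M_def by (simp add: sum_distrib_left algebra_simps)
    finally have S1: "S = z i * (2 * bil n (M i) x y)" .
    have "S = (\<Sum>j<k. \<Sum>a<n. \<Sum>b<n. \<Sum>c<n. z j * x a * E i a c * E j c b * y b)
            + (\<Sum>j<k. \<Sum>a<n. \<Sum>b<n. \<Sum>c<n. z j * x a * E j a c * E i c b * y b)"
      unfolding S_def T_def by (simp add: sum_distrib_left sum_distrib_right sum.distrib algebra_simps)
    also have "(\<Sum>j<k. \<Sum>a<n. \<Sum>b<n. \<Sum>c<n. z j * x a * E i a c * E j c b * y b)
        = (\<Sum>a<n. \<Sum>c<n. \<Sum>j<k. \<Sum>b<n. z j * x a * E i a c * E j c b * y b)"
      by (rule swap4a)
    also have "\<dots> = (\<Sum>a<n. \<Sum>c<n. x a * E i a c * (\<Sum>j<k. (\<Sum>b<n. E j c b * y b) * z j))"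
      by (simp add: sum_distrib_left sum_distrib_right mult_ac)
    also have "\<dots> = 0" using eq1 by simp
    also have "(\<Sum>j<k. \<Sum>a<n. \<Sum>b<n. \<Sum>c<n. z j * x a * E j a c * E i c b * y b)
        = (\<Sum>c<n. \<Sum>b<n. \<Sum>j<k. \<Sum>a<n. z j * x a * E j a c * E i c b * y b)"
      by (rule swap4b)
    also have "\<dots> = (\<Sum>c<n. \<Sum>b<n. (\<Sum>j<k. (\<Sum>a<n. x a * E j a c) * z j) * E i c b * y b)"
      by (simp add: sum_distrib_left sum_distrib_right mult_ac)
    also have "\<dots> = 0" using eq2 by simp
    finally have "S = 0" by simp
    with S1 xy ik show "z i = 0" by simp
  qed
  with z(1) show False by auto
qed

lemma mult_entry:
  assumes "A \<in> carrier_mat n n" "B \<in> carrier_mat n n" "a < n" "b < n"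
  shows "(A * B) $$ (a,b) = (\<Sum>c<n. A $$ (a,c) * B $$ (c,b))"
  using assms by (simp add: scalar_prod_def atLeast0LessThan)

theorem theorem2:
  shows "\<exists>C::real. \<forall>n k (e :: nat \<Rightarrow> complex mat).
           anticommuting n k e \<and> (\<forall>i<k. e i * e i \<noteq> 0\<^sub>m n n)
           \<longrightarrow> real k \<le> C * real n"
proof (intro exI[of _ 2] allI impI)
  fix n k and e :: "nat \<Rightarrow> complex mat"
  assume h: "anticommuting n k e \<and> (\<forall>i<k. e i * e i \<noteq> 0\<^sub>m n n)"
  have car: "\<And>i. i<k \<Longrightarrow> e i \<in> carrier_mat n n" using h unfolding anticommuting_def by blast
  have ac: "\<And>i j. i<k \<Longrightarrow> j<k \<Longrightarrow> i \<noteq> j \<Longrightarrow> e i * e j = - (e j * e i)"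
    using h unfolding anticommuting_def by blast
  define E where "E = (\<lambda>i a b. e i $$ (a,b))"
  have "k \<le> 2*n"
  proof (rule key[of k n E])
    fix i j a b assume hh: "i<k" "j<k" "i\<noteq>j" "a<n" "b<n"
    have "(e i * e j) $$ (a,b) = (- (e j * e i)) $$ (a,b)" using ac[OF hh(1-3)] by simp
    also have "\<dots> = - ((e j * e i) $$ (a,b))" using car[OF hh(1)] car[OF hh(2)] hh by (simp add: carrier_matD)
    finally show "(\<Sum>c<n. E i a c * E j c b) = - (\<Sum>c<n. E j a c * E i c b)"
      using mult_entry[OF car[OF hh(1)] car[OF hh(2)] hh(4,5)]
            mult_entry[OF car[OF hh(2)] car[OF hh(1)] hh(4,5)]
      by (simp add: E_def)
  next
    fix i assume i: "i<k"
    have "e i * e i \<noteq> 0\<^sub>m n n" using h i by blast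
    moreover have "e i * e i \<in> carrier_mat n n" using car[OF i] by simp
    ultimately obtain a b where ab: "a<n" "b<n" "(e i * e i) $$ (a,b) \<noteq> 0"
    proof -
      assume th: "\<And>a b. a<n \<Longrightarrow> b<n \<Longrightarrow> (e i * e i) $$ (a,b) \<noteq> 0 \<Longrightarrow> thesis"
      show thesis
      proof (rule ccontr)
        assume "\<not> thesis"
        hence "\<forall>a<n. \<forall>b<n. (e i * e i) $$ (a,b) = 0" using th by blast
        hence "e i * e i = 0\<^sub>m n n" using \<open>e i * e i \<in> carrier_mat n n\<close>
          by (intro eq_matI) auto
        with \<open>e i * e i \<noteq> 0\<^sub>m n n\<close> show False by simp
      qed
    qed
    then show "\<exists>a<n. \<exists>b<n. (\<Sum>c<n. E i a c * E i c b) \<noteq> 0"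
      using mult_entry[OF car[OF i] car[OF i] ab(1,2)] by (auto simp: E_def)
  qed
  then show "real k \<le> 2 * real n" by simp
qed

end
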